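(* Let $\Phi_t=(I-t\Psi)^{-1}$ be an inverse-linear path with $h_0$-self-adjoint $\Psi$, fix $X,Y\in\mathfrak g$, and set $A=[\Psi X,Y]+[X,\Psi Y]$, $B=[\Psi X,\Psi Y]$, $C=[\Psi X,Y]+[\Psi Y,X]$, $D=\Psi^2[X,Y]-\Psi A+B$. Then for every $t$ in the domain of $\kappa=\kappa^\Psi$, $$\kappa(t)=\alpha+\beta t+\gamma t^2+\delta t^3-\tfrac34 t^4\,|D|_{h_t}^2,$$ where $|D|_{h_t}^2=\langle\Phi_tD,D\rangle$ and $\alpha=\tfrac14|[X,Y]|^2$, $\beta=-\tfrac34\langle\Psi[X,Y],[X,Y]\rangle$, $\gamma=-\tfrac34|\Psi[X,Y]|^2+\tfrac32\langle\Psi[X,Y],A\rangle-\tfrac12\langle[X,Y],B\rangle-\tfrac14|A|^2+\tfrac14|C|^2-\langle[\Psi X,X],[\Psi Y,Y]\rangle$, $\delta=-\tfrac34\langle\Psi^3[X,Y],[X,Y]\rangle+\tfrac32\langle\Psi^2[X,Y],A\rangle-\tfrac32\langle\Psi[X,Y],B\rangle-\tfrac34\langle\Psi A,A\rangle-\tfrac14\langle\Psi C,C\rangle+\langle\Psi[\Psi X,X],[\Psi Y,Y]\rangle+\langle A,B\rangle$.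
   Context: $G$ is a compact Lie group with Lie algebra $\mathfrak g$ and bi-invariant metric $h_0$; $\langle Z_1,Z_2\rangle=h_0(Z_1,Z_2)$, $|Z|^2=\langle Z,Z\rangle$. A left-invariant metric $h$ corresponds to the $h_0$-self-adjoint positive definite $\Phi$ with $h(X,Y)=\langle\Phi X,Y\rangle$ on $\mathfrak g$. An inverse-linear path is $\Phi_t=(I-t\Psi)^{-1}$ with $\Psi$ $h_0$-self-adjoint; $h_t$ is the left-invariant metric with matrix $\Phi_t$, defined on the open interval of $t$ (containing $0$) where $I-t\Psi$ is positive definite; this interval is the domain of $\kappa$. The unnormalized sectional curvature is $k_h(Z_1,Z_2)=h(R_h(Z_1,Z_2)Z_2,Z_1)$, and $\kappa(t)=\kappa^\Psi(t)=k_{h_t}(\Phi_t^{-1}X,\Phi_t^{-1}Y)$. *)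

theory Defs
  imports "HOL-Analysis.Analysis"
begin

text \<open>The Lie algebra g of a compact Lie group G with bi-invariant metric h0 is modelled
as a finite-dimensional real inner product space (type class euclidean_space, whose inner
product plays the role of h0) together with a Lie bracket br for which h0 is ad-invariant.\<close>

definition compact_lie_algebra :: "('a::euclidean_space \<Rightarrow> 'a \<Rightarrow> 'a) \<Rightarrow> bool" where
  "compact_lie_algebra br \<longleftrightarrow>
     bilinear br \<and>
     (\<forall>X Y. br X Y = - br Y X) \<and>
     (\<forall>X Y Z. br X (br Y Z) + br Y (br Z X) + br Z (br X Y) = 0) \<and>
     (\<forall>X Y Z. inner (br X Y) Z = inner X (br Y Z))"

definition self_adjoint :: "('a::euclidean_space \<Rightarrow> 'a) \<Rightarrow> bool" where
  "self_adjoint P \<longleftrightarrow> linear P \<and> (\<forall>u v. inner (P u) v = inner u (P v))"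

text \<open>Left-invariant metric with matrix Phi: h(X,Y) = <Phi X, Y>.\<close>
definition metric :: "('a::euclidean_space \<Rightarrow> 'a) \<Rightarrow> 'a \<Rightarrow> 'a \<Rightarrow> real" where
  "metric Phi X Y = inner (Phi X) Y"

text \<open>Levi-Civita connection on left-invariant vector fields (Koszul formula).\<close>
definition lc_conn :: "('a::euclidean_space \<Rightarrow> 'a \<Rightarrow> 'a) \<Rightarrow> ('a \<Rightarrow> 'a) \<Rightarrow> 'a \<Rightarrow> 'a \<Rightarrow> 'a" where
  "lc_conn br Phi X Y = (THE U. \<forall>Z. metric Phi U Z =
      (metric Phi (br X Y) Z - metric Phi (br Y Z) X + metric Phi (br Z X) Y) / 2)"

definition curv :: "('a::euclidean_space \<Rightarrow> 'a \<Rightarrow> 'a) \<Rightarrow> ('a \<Rightarrow> 'a) \<Rightarrow> 'a \<Rightarrow> 'a \<Rightarrow> 'a \<Rightarrow> 'a" where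
  "curv br Phi X Y Z = lc_conn br Phi X (lc_conn br Phi Y Z) - lc_conn br Phi Y (lc_conn br Phi X Z)
      - lc_conn br Phi (br X Y) Z"

definition sec_curv :: "('a::euclidean_space \<Rightarrow> 'a \<Rightarrow> 'a) \<Rightarrow> ('a \<Rightarrow> 'a) \<Rightarrow> 'a \<Rightarrow> 'a \<Rightarrow> real" where
  "sec_curv br Phi Z1 Z2 = metric Phi (curv br Phi Z1 Z2 Z2) Z1"

definition inv_lin_path :: "('a::euclidean_space \<Rightarrow> 'a) \<Rightarrow> real \<Rightarrow> 'a \<Rightarrow> 'a" where
  "inv_lin_path Psi t = inv (\<lambda>v. v - t *\<^sub>R Psi v)"

definition kappa_dom :: "('a::euclidean_space \<Rightarrow> 'a) \<Rightarrow> real set" where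
  "kappa_dom Psi = {t. \<forall>v. v \<noteq> 0 \<longrightarrow> inner (v - t *\<^sub>R Psi v) v > 0}"

definition kappa :: "('a::euclidean_space \<Rightarrow> 'a \<Rightarrow> 'a) \<Rightarrow> ('a \<Rightarrow> 'a) \<Rightarrow> 'a \<Rightarrow> 'a \<Rightarrow> real \<Rightarrow> real" where
  "kappa br Psi X Y t = sec_curv br (inv_lin_path Psi t)
      (inv (inv_lin_path Psi t) X) (inv (inv_lin_path Psi t) Y)"

end

theory Submission
  imports Defs
begin

lemma koszul_K:
  fixes br :: "'a::euclidean_space \<Rightarrow> 'a \<Rightarrow> 'a" and Phi :: "'a \<Rightarrow> 'a"
  assumes anti: "\<And>a b. br a b = - br b a"
    and adinv: "\<And>a b c. inner (br a b) c = inner a (br b c)"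
    and sa: "\<And>u v. inner (Phi u) v = inner u (Phi v)"
  shows "inner ((1/2) *\<^sub>R (Phi (br a b) - br (Phi a) b + br a (Phi b))) Z
     = (inner (Phi (br a b)) Z - inner (Phi (br b Z)) a + inner (Phi (br Z a)) b) / 2"
proof -
  have e1: "inner (Phi (br b Z)) a = inner Z (br (Phi a) b)" for Z
  proof -
    have "inner (Phi (br b Z)) a = inner (br b Z) (Phi a)" by (simp add: sa)
    also have "\<dots> = - inner (br Z b) (Phi a)" by (subst anti) simp
    also have "\<dots> = - inner Z (br b (Phi a))" by (simp add: adinv)
    also have "\<dots> = inner Z (br (Phi a) b)" by (subst (2) anti) simp
    finally show ?thesis .
  qed
  have e2: "inner (Phi (br Z a)) b = inner Z (br a (Phi b))" for Z
    by (simp add: sa adinv)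
  show ?thesis unfolding e1 e2
    by (simp add: inner_add_left inner_diff_left inner_add_right inner_diff_right inner_commute)
qed

lemma lc_conn_char:
  fixes br :: "'a::euclidean_space \<Rightarrow> 'a \<Rightarrow> 'a" and Phi M :: "'a \<Rightarrow> 'a"
  assumes anti: "\<And>a b. br a b = - br b a"
    and adinv: "\<And>a b c. inner (br a b) c = inner a (br b c)"
    and sa: "\<And>u v. inner (Phi u) v = inner u (Phi v)"
    and PM: "\<And>v. Phi (M v) = v" and MP: "\<And>v. M (Phi v) = v"
  shows "lc_conn br Phi a b = M ((1/2) *\<^sub>R (Phi (br a b) - br (Phi a) b + br a (Phi b)))"
proof -
  define K where "K = (1/2) *\<^sub>R (Phi (br a b) - br (Phi a) b + br a (Phi b))"
  have e1: "inner (Phi (br b Z)) a = inner Z (br (Phi a) b)" for Z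
  proof -
    have "inner (Phi (br b Z)) a = inner (br b Z) (Phi a)" by (simp add: sa)
    also have "\<dots> = - inner (br Z b) (Phi a)" by (subst anti) simp
    also have "\<dots> = - inner Z (br b (Phi a))" by (simp add: adinv)
    also have "\<dots> = inner Z (br (Phi a) b)" by (subst (2) anti) simp
    finally show ?thesis .
  qed
  have e2: "inner (Phi (br Z a)) b = inner Z (br a (Phi b))" for Z
    by (simp add: sa adinv)
  have key: "inner K Z = (metric Phi (br a b) Z - metric Phi (br b Z) a + metric Phi (br Z a) b) / 2" for Z
    unfolding metric_def K_def e1 e2
    by (simp add: inner_add_left inner_diff_left inner_add_right inner_diff_right inner_commute)
  have "(THE U. \<forall>Z. metric Phi U Z =
      (metric Phi (br a b) Z - metric Phi (br b Z) a + metric Phi (br Z a) b) / 2) = M K"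
  proof (rule the_equality)
    show "\<forall>Z. metric Phi (M K) Z =
      (metric Phi (br a b) Z - metric Phi (br b Z) a + metric Phi (br Z a) b) / 2"
      using key by (simp add: metric_def PM)
  next
    fix U assume "\<forall>Z. metric Phi U Z =
      (metric Phi (br a b) Z - metric Phi (br b Z) a + metric Phi (br Z a) b) / 2"
    then have "\<forall>Z. inner (Phi U - K) Z = 0" using key unfolding metric_def inner_diff_left by (metis (no_types) diff_self)
    then have "Phi U - K = 0" using inner_eq_zero_iff by blast
    then have "Phi U = K" by simp
    then show "U = M K" using MP by metis
  qed
  then show ?thesis unfolding lc_conn_def K_def by simp
qed


theorem mainTheorem2:
  fixes br :: "'a::euclidean_space \<Rightarrow> 'a \<Rightarrow> 'a"
    and Psi :: "'a \<Rightarrow> 'a" and X Y :: 'a and t :: real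
  assumes "compact_lie_algebra br"
    and "self_adjoint Psi"
    and "t \<in> kappa_dom Psi"
  shows "let A = br (Psi X) Y + br X (Psi Y);
             B = br (Psi X) (Psi Y);
             C = br (Psi X) Y + br (Psi Y) X;
             D = Psi (Psi (br X Y)) - Psi A + B;
             \<alpha> = 1/4 * (norm (br X Y))\<^sup>2;
             \<beta> = - 3/4 * inner (Psi (br X Y)) (br X Y);
             \<gamma> = - 3/4 * (norm (Psi (br X Y)))\<^sup>2 + 3/2 * inner (Psi (br X Y)) A
                 - 1/2 * inner (br X Y) B - 1/4 * (norm A)\<^sup>2 + 1/4 * (norm C)\<^sup>2
                 - inner (br (Psi X) X) (br (Psi Y) Y);
             \<delta> = - 3/4 * inner (Psi (Psi (Psi (br X Y)))) (br X Y)
                 + 3/2 * inner (Psi (Psi (br X Y))) A - 3/2 * inner (Psi (br X Y)) B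
                 - 3/4 * inner (Psi A) A - 1/4 * inner (Psi C) C
                 + inner (Psi (br (Psi X) X)) (br (Psi Y) Y) + inner A B
         in kappa br Psi X Y t = \<alpha> + \<beta> * t + \<gamma> * t\<^sup>2 + \<delta> * t ^ 3
              - 3/4 * t ^ 4 * inner (inv_lin_path Psi t D) D"
proof -
  have bl: "bilinear br" and anti: "\<And>a b. br a b = - br b a"
    and adinv: "\<And>a b c. inner (br a b) c = inner a (br b c)"
    using assms(1) unfolding compact_lie_algebra_def by blast+
  have linP: "linear Psi" and saP: "\<And>u v. inner (Psi u) v = inner u (Psi v)"
    using assms(2) unfolding self_adjoint_def by auto
  have pd: "\<And>v. v \<noteq> 0 \<Longrightarrow> inner (v - t *\<^sub>R Psi v) v > 0"
    using assms(3) unfolding kappa_dom_def by auto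
  have brr: "br a a = 0" for a using anti[of a a] by (metis eq_neg_iff_add_eq_0 scaleR_2 scaleR_eq_0_iff zero_neq_numeral)
  have adL: "inner (br a V) c = inner V (br c a)" for a V c
  proof -
    have "inner (br a V) c = - inner (br V a) c" by (subst anti) simp
    also have "\<dots> = - inner V (br a c)" by (simp add: adinv)
    also have "\<dots> = inner V (br c a)" by (subst (2) anti) simp
    finally show ?thesis .
  qed
  define M where "M = (\<lambda>v. v - t *\<^sub>R Psi v)"
  have linM: "linear M" unfolding M_def
    by (rule linearI) (simp_all add: linear_add[OF linP] linear_cmul[OF linP] algebra_simps)
  have saM: "inner (M u) v = inner u (M v)" for u v
    unfolding M_def by (simp add: inner_diff_left inner_diff_right saP)
  have injM: "inj M"
  proof (rule injI)
    fix u v assume "M u = M v"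
    then have "M (u - v) = 0" by (simp add: linear_diff[OF linM])
    then have "inner (M (u - v)) (u - v) = 0" by simp
    then show "u = v" using pd[of "u - v"] unfolding M_def by (cases "u - v = 0") auto
  qed
  have surjM: "surj M" using linear_injective_imp_surjective[OF linM injM] by simp
  have bijM: "bij M" using injM surjM by (simp add: bij_def)
  define Phi where "Phi = inv_lin_path Psi t"
  have PhiM: "Phi = inv M" unfolding Phi_def inv_lin_path_def M_def ..
  have PM: "\<And>v. Phi (M v) = v" unfolding PhiM using injM by simp
  have MP: "\<And>v. M (Phi v) = v" unfolding PhiM using surjM by (simp add: surj_f_inv_f)
  have invPhi: "inv Phi = M" unfolding PhiM using bijM by (simp add: inv_inv_eq)
  have saPhi: "inner (Phi u) v = inner u (Phi v)" for u v
  proof -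
    have "inner (Phi u) v = inner (Phi u) (M (Phi v))" by (simp only: MP)
    also have "\<dots> = inner (M (Phi u)) (Phi v)" by (simp only: saM)
    also have "\<dots> = inner u (Phi v)" by (simp only: MP)
    finally show ?thesis .
  qed
  have linPhi: "linear Phi"
  proof (rule linearI)
    fix a b show "Phi (a + b) = Phi a + Phi b"
    proof -
      have "M (Phi a + Phi b) = a + b" by (simp only: linear_add[OF linM] MP)
      then have "Phi (a + b) = Phi (M (Phi a + Phi b))" by simp
      then show ?thesis by (simp only: PM)
    qed
  next
    fix r a show "Phi (r *\<^sub>R a) = r *\<^sub>R Phi a"
    proof -
      have "M (r *\<^sub>R Phi a) = r *\<^sub>R a" by (simp only: linear_cmul[OF linM] MP)
      then have "Phi (r *\<^sub>R a) = Phi (M (r *\<^sub>R Phi a))" by simp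
      then show ?thesis by (simp only: PM)
    qed
  qed
  define K where "K a b = (1/2) *\<^sub>R (Phi (br a b) - br (Phi a) b + br a (Phi b))" for a b
  have lc: "lc_conn br Phi a b = M (K a b)" for a b
    unfolding K_def by (rule lc_conn_char[OF anti adinv saPhi PM MP])
  have kz: "inner (K a b) c = (inner (Phi (br a b)) c - inner (Phi (br b c)) a + inner (Phi (br c a)) b) / 2"
    for a b c unfolding K_def by (rule koszul_K[OF anti adinv saPhi])
  note brl = bilinear_lsub[OF bl] bilinear_rsub[OF bl] bilinear_lmul[OF bl] bilinear_rmul[OF bl]
     bilinear_ladd[OF bl] bilinear_radd[OF bl]
  note psl = linear_add[OF linP] linear_diff[OF linP] linear_cmul[OF linP] linear_neg[OF linP]
  note inl = inner_add_left inner_add_right inner_diff_left inner_diff_right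
     inner_scaleR_left inner_scaleR_right
  define Z1 where "Z1 = M X"
  define Z2 where "Z2 = M Y"
  have PZ1: "Phi Z1 = X" and PZ2: "Phi Z2 = Y" unfolding Z1_def Z2_def by (simp_all add: PM)
  define L where "L = br X Y"
  define A where "A = br (Psi X) Y + br X (Psi Y)"
  define B where "B = br (Psi X) (Psi Y)"
  define C where "C = br (Psi X) Y + br (Psi Y) X"
  define D where "D = Psi (Psi L) - Psi A + B"
  define E where "E = L + t *\<^sub>R (Psi L - A)"
  define N where "N = br Z1 Z2"
  define R0 where "R0 = br (Psi X) X"
  define P0 where "P0 = br (Psi Y) Y"
  have N_eq: "N = L - t *\<^sub>R A + t\<^sup>2 *\<^sub>R B"
    unfolding N_def Z1_def Z2_def M_def L_def A_def B_def
    by (simp add: brl algebra_simps power2_eq_square)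
  have ME: "M E + t\<^sup>2 *\<^sub>R D = N"
    unfolding N_eq M_def E_def D_def
    by (simp add: psl algebra_simps power2_eq_square)
  have PhiN: "Phi N = E + t\<^sup>2 *\<^sub>R Phi D"
  proof -
    have "Phi N = Phi (M E) + Phi (t\<^sup>2 *\<^sub>R D)"
      unfolding ME[symmetric] by (rule linear_add[OF linPhi])
    then show ?thesis by (simp add: PM linear_cmul[OF linPhi])
  qed
  have Qeq: "br Z1 Y - br X Z2 = - t *\<^sub>R C"
  proof -
    have "br (Psi Y) X = - br X (Psi Y)" by (rule anti)
    then show ?thesis unfolding Z1_def Z2_def M_def C_def
      by (simp add: brl algebra_simps)
  qed
  have Seq: "br X Z2 + br Z1 Y = 2 *\<^sub>R L - t *\<^sub>R A"
    unfolding Z1_def Z2_def M_def A_def L_def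
    by (simp add: brl algebra_simps scaleR_2)
  have KZ2: "K Z2 Z2 = - t *\<^sub>R P0"
  proof -
    have "br Y Z2 = - br Z2 Y" by (rule anti)
    then have "K Z2 Z2 = br Z2 Y" unfolding K_def PZ2
      by (simp add: brr linear_0[OF linPhi] scaleR_2[symmetric])
    also have "\<dots> = - t *\<^sub>R P0" unfolding Z2_def M_def P0_def by (simp add: brl brr)
    finally show ?thesis .
  qed
  have XZ1: "br X Z1 = t *\<^sub>R R0"
  proof -
    have "br X (Psi X) = - br (Psi X) X" by (rule anti)
    then show ?thesis unfolding Z1_def M_def R0_def by (simp add: brl brr)
  qed
  have KZ1Z2: "K Z1 Z2 = (1/2) *\<^sub>R (Phi N - t *\<^sub>R C)"
  proof -
    have "K Z1 Z2 = (1/2) *\<^sub>R (Phi N + (br Z1 Y - br X Z2))"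
      unfolding K_def PZ1 PZ2 N_def by (simp add: algebra_simps)
    then show ?thesis unfolding Qeq by simp
  qed
  define W where "W = M (K Z2 Z2)"
  define V where "V = M (K Z1 Z2)"
  have curv_eq: "curv br Phi Z1 Z2 Z2 = M (K Z1 W) - M (K Z2 V) - M (K N Z2)"
    unfolding curv_def lc W_def V_def N_def ..
  have k0: "kappa br Psi X Y t = inner (K Z1 W) Z1 - inner (K Z2 V) Z1 - inner (K N Z2) Z1"
  proof -
    have "kappa br Psi X Y t = sec_curv br Phi Z1 Z2"
      unfolding kappa_def Phi_def[symmetric] invPhi Z1_def Z2_def ..
    also have "\<dots> = inner (Phi (curv br Phi Z1 Z2 Z2)) Z1"
      unfolding sec_curv_def metric_def ..
    also have "\<dots> = inner (K Z1 W - K Z2 V - K N Z2) Z1"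
      unfolding curv_eq by (simp add: linear_diff[OF linPhi] PM)
    finally show ?thesis by (simp add: inner_diff_left)
  qed
  have sPhi: "inner (Phi u) Z1 = inner u X" "inner (Phi u) Z2 = inner u Y" for u
    by (simp_all add: saPhi PZ1 PZ2)
  have T1: "inner (K Z1 W) Z1 = - t\<^sup>2 * inner R0 P0 + t ^ 3 * inner (Psi R0) P0"
  proof -
    have "br W Z1 = - br Z1 W" by (rule anti)
    then have "inner (K Z1 W) Z1 = inner (br Z1 W) X"
      unfolding kz by (simp add: brr linear_0[OF linPhi] sPhi inner_minus_left)
    also have "\<dots> = inner W (t *\<^sub>R R0)" unfolding adL XZ1 ..
    also have "\<dots> = - t\<^sup>2 * inner P0 R0 + t ^ 3 * inner (Psi P0) R0"
      unfolding W_def KZ2 M_def by (simp add: psl inl power2_eq_square power3_eq_cube algebra_simps)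
    moreover have "inner P0 R0 = inner R0 P0" "inner (Psi P0) R0 = inner (Psi R0) P0"
      by (simp add: inner_commute, metis saP inner_commute)
    ultimately show ?thesis by simp
  qed
  have T2: "inner (K Z2 V) Z1 = (inner (Phi N) N - t\<^sup>2 * inner C C + t ^ 3 * inner (Psi C) C) / 4"
  proof -
    have "inner (K Z2 V) Z1 = (inner V (br X Z2) - inner V (br Z1 Y) + inner (Phi N) V) / 2"
      unfolding kz sPhi N_def by (simp only: adL[of Z2 V X] adinv[of V Z1 Y])
    also have "\<dots> = inner V (Phi N + t *\<^sub>R C) / 2"
    proof -
      have "br X Z2 - br Z1 Y = t *\<^sub>R C" using Qeq by (simp add: algebra_simps)
      then have "inner V (br X Z2) - inner V (br Z1 Y) = inner V (t *\<^sub>R C)"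
        by (metis inner_diff_right)
      then show ?thesis by (simp add: inl inner_commute)
    qed
    also have "\<dots> = (inner (M (Phi N)) (Phi N) - t\<^sup>2 * inner (M C) C
        + t * (inner (M (Phi N)) C - inner (M C) (Phi N))) / 4"
      unfolding V_def KZ1Z2 by (simp add: linear_cmul[OF linM] linear_diff[OF linM] inl power2_eq_square algebra_simps; simp add: field_simps)
    also have "\<dots> = (inner (Phi N) N - t\<^sup>2 * inner (M C) C) / 4"
      by (simp add: MP saM inner_commute)
    also have "\<dots> = (inner (Phi N) N - t\<^sup>2 * inner C C + t ^ 3 * inner (Psi C) C) / 4"
      unfolding M_def by (simp add: inl power2_eq_square power3_eq_cube algebra_simps)
    finally show ?thesis .
  qed
  have T3: "inner (K N Z2) Z1 = (inner (Phi N) N - inner N (2 *\<^sub>R L - t *\<^sub>R A)) / 2"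
  proof -
    have "br Z2 Z1 = - N" unfolding N_def by (rule anti)
    then have "inner (K N Z2) Z1 = (inner N (br Z2 X) + inner (Phi N) N + inner N (br Y Z1)) / 2"
      unfolding kz sPhi adinv[of N Z2 X] adL[of Z1 N Y] by (simp add: linear_neg[OF linPhi] saPhi inner_commute)
    also have "\<dots> = (inner (Phi N) N - inner N (br X Z2 + br Z1 Y)) / 2"
    proof -
      have "br Z2 X + br Y Z1 = - (br X Z2 + br Z1 Y)"
        using anti[of Z2 X] anti[of Y Z1] by simp
      then have "inner N (br Z2 X) + inner N (br Y Z1) = - inner N (br X Z2 + br Z1 Y)"
        by (metis inner_add_right inner_minus_right)
      then show ?thesis by simp
    qed
    finally show ?thesis unfolding Seq .
  qed
  have PNN: "inner (Phi N) N = inner E N + t\<^sup>2 * inner D E + t ^ 4 * inner (Phi D) D"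
  proof -
    have "inner (Phi D) N = inner (Phi D) (M E) + t\<^sup>2 * inner (Phi D) D"
      unfolding ME[symmetric] by (simp add: inl)
    also have "\<dots> = inner D E + t\<^sup>2 * inner (Phi D) D"
      by (simp add: saM[symmetric] MP)
    finally have "inner (Phi D) N = inner D E + t\<^sup>2 * inner (Phi D) D" .
    moreover have t4: "t ^ 4 = t * (t * (t * t))" by (simp add: eval_nat_numeral)
    ultimately show ?thesis unfolding PhiN t4
      by (simp add: inl power2_eq_square algebra_simps)
  qed
  have c1: "inner A L = inner L A" "inner B L = inner L B" "inner B A = inner A B"
    "inner L (Psi L) = inner (Psi L) L" "inner A (Psi L) = inner (Psi L) A"
    "inner (Psi A) L = inner (Psi L) A" "inner L (Psi A) = inner (Psi L) A"
    "inner (Psi (Psi L)) L = inner (Psi L) (Psi L)" "inner L (Psi (Psi L)) = inner (Psi L) (Psi L)"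
    "inner (Psi (Psi L)) (Psi L) = inner (Psi (Psi (Psi L))) L"
    "inner (Psi L) (Psi (Psi L)) = inner (Psi (Psi (Psi L))) L"
    "inner (Psi A) (Psi L) = inner (Psi (Psi L)) A"
    "inner A (Psi (Psi L)) = inner (Psi (Psi L)) A"
    "inner B (Psi L) = inner (Psi L) B" "inner A (Psi A) = inner (Psi A) A"
    by (metis saP inner_commute)+
  have EN: "inner E N = inner L L - 2 * t * inner L A + t\<^sup>2 * inner L B + t * inner (Psi L) L
      - t\<^sup>2 * inner (Psi L) A + t ^ 3 * inner (Psi L) B + t\<^sup>2 * inner A A - t ^ 3 * inner A B"
    unfolding E_def N_eq by (simp add: inl c1 algebra_simps power2_eq_square power3_eq_cube)
  have DE: "inner D E = inner (Psi L) (Psi L) + t * inner (Psi (Psi (Psi L))) L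
      - 2 * t * inner (Psi (Psi L)) A - inner (Psi L) A + t * inner (Psi A) A + inner L B
      + t * inner (Psi L) B - t * inner A B"
    unfolding E_def D_def by (simp add: inl psl c1 algebra_simps)
  have NS: "inner N (2 *\<^sub>R L - t *\<^sub>R A) = 2 * inner L L - 3 * t * inner L A + t\<^sup>2 * inner A A
      + 2 * t\<^sup>2 * inner L B - t ^ 3 * inner A B"
    unfolding N_eq by (simp add: inl c1 algebra_simps power2_eq_square power3_eq_cube)
  have fin: "kappa br Psi X Y t = 1/4 * inner L L + (- 3/4 * inner (Psi L) L) * t
      + (- 3/4 * inner (Psi L) (Psi L) + 3/2 * inner (Psi L) A - 1/2 * inner L B
         - 1/4 * inner A A + 1/4 * inner C C - inner R0 P0) * t\<^sup>2
      + (- 3/4 * inner (Psi (Psi (Psi L))) L + 3/2 * inner (Psi (Psi L)) A - 3/2 * inner (Psi L) B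
         - 3/4 * inner (Psi A) A - 1/4 * inner (Psi C) C + inner (Psi R0) P0 + inner A B) * t ^ 3
      - 3/4 * t ^ 4 * inner (Phi D) D"
    unfolding k0 T1 T2 T3 PNN EN DE NS
    by (simp add: algebra_simps power2_eq_square power3_eq_cube eval_nat_numeral; simp add: field_simps)
  show ?thesis
    unfolding Let_def
    unfolding L_def[symmetric] R0_def[symmetric] P0_def[symmetric]
    unfolding A_def[symmetric] B_def[symmetric] C_def[symmetric]
    unfolding D_def[symmetric] Phi_def[symmetric] power2_norm_eq_inner
    using fin by simp
qed

end
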